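(* Let $\pi$ be a propositional formula that is neither a tautology nor a contradiction. Then the formula $[\ddagger\pi](\Box\lnot\pi \lor \Box\pi) \leftrightarrow \Box\bot$ is valid, i.e. true at every world of every model.
   Context: Fix a countable non-empty set $\mathit{At}$ of atoms. Formulas are built from $\top$, atoms $p\in\mathit{At}$, $\lnot$, $\land$, $\Box$ and, for each propositional formula $\pi$, the operator $[\ddagger\pi]$ (read "after the agent forgets whether $\pi$"); $\bot,\lor,\to,\leftrightarrow$ are defined as usual and $\Diamond\varphi := \lnot\Box\lnot\varphi$, $\langle\ddagger\pi\rangle\varphi:=\lnot[\ddagger\pi]\lnot\varphi$. A model is $\mathcal{M}=\langle W,R,V\rangle$ with $W\neq\varnothing$, $R\subseteq W\times W$ arbitrary, $V:\mathit{At}\to\mathcal{P}(W)$; $\mathcal{M},w\models p$ iff $w\in V(p)$, Boolean clauses as usual, and $\mathcal{M},w\models\Box\varphi$ iff $\mathcal{M},v\models\varphi$ for all $v$ with $wRv$. Clauses: a literal is an atom or its negation; a clause is a finite set $D$ of literals read as $\bigvee D$ ($\bigvee\varnothing:=\bot$); it is tautological if it contains both $p$ and $\lnot p$ for some $p$. For propositional $\pi$, $\mathcal{C}(\pi)$ is the set of all non-tautological clauses $D$ with $\models\pi\to\bigvee D$ such that no proper subset $D'\subsetneq D$ satisfies $\models\pi\to\bigvee D'$. Model operation: for a model $\mathcal{M}$ and a finite family $(D_i)_{i\in I}$ of non-tautological clauses with $0\notin I$, $\mathcal{M}^{(D_i)_{i\in I}}_u=\langle W',R',V'\rangle$ has $W'=W\times(\{0\}\cup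 I)$, $(w,i)R'(v,j)$ iff $wRv$, $(w,0)\in V'(p)$ iff $w\in V(p)$, and for $i\in I$: $(w,i)\in V'(p)$ iff $\lnot p\in D_i$, or $\{p,\lnot p\}\cap D_i=\varnothing$ and $w\in V(p)$. Semantics of forgetting whether: $\mathcal{M},w\models[\ddagger\pi]\varphi$ iff for all $D_1\in\mathcal{C}(\pi)$ and all $D_2\in\mathcal{C}(\lnot\pi)$, $\mathcal{M}^{(D_1,D_2)}_u,(w,0)\models\varphi$ (family indexed by $I=\{1,2\}$). *)

theory Defs
  imports Main "HOL-Library.Countable"
begin

datatype 'a pform = PTop | PAtom 'a | PNeg "'a pform" | PConj "'a pform" "'a pform"

primrec peval :: "('a \<Rightarrow> bool) \<Rightarrow> 'a pform \<Rightarrow> bool" where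
  "peval v PTop = True"
| "peval v (PAtom p) = v p"
| "peval v (PNeg a) = (\<not> peval v a)"
| "peval v (PConj a b) = (peval v a \<and> peval v b)"

definition ptaut :: "'a pform \<Rightarrow> bool" where
  "ptaut \<pi> \<longleftrightarrow> (\<forall>v. peval v \<pi>)"

definition pcontra :: "'a pform \<Rightarrow> bool" where
  "pcontra \<pi> \<longleftrightarrow> (\<forall>v. \<not> peval v \<pi>)"

datatype 'a lit = Pos 'a | NegL 'a

primrec leval :: "('a \<Rightarrow> bool) \<Rightarrow> 'a lit \<Rightarrow> bool" where
  "leval v (Pos p) = v p"
| "leval v (NegL p) = (\<not> v p)"

definition ceval :: "('a \<Rightarrow> bool) \<Rightarrow> 'a lit set \<Rightarrow> bool" where
  "ceval v D \<longleftrightarrow> (\<exists>l\<in>D. leval v l)"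

definition tautological :: "'a lit set \<Rightarrow> bool" where
  "tautological D \<longleftrightarrow> (\<exists>p. Pos p \<in> D \<and> NegL p \<in> D)"

definition entails_clause :: "'a pform \<Rightarrow> 'a lit set \<Rightarrow> bool" where
  "entails_clause \<pi> D \<longleftrightarrow> (\<forall>v. peval v \<pi> \<longrightarrow> ceval v D)"

definition Cl :: "'a pform \<Rightarrow> 'a lit set set" where
  "Cl \<pi> = {D. finite D \<and> \<not> tautological D \<and> entails_clause \<pi> D \<and>
                 (\<forall>D'. D' \<subset> D \<longrightarrow> \<not> entails_clause \<pi> D')}"

datatype 'a fm = Top | Atom 'a | Neg "'a fm" | Conj "'a fm" "'a fm" | Box "'a fm"
  | Forget "'a pform" "'a fm"

primrec emb :: "'a pform \<Rightarrow> 'a fm" where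
  "emb PTop = Top"
| "emb (PAtom p) = Atom p"
| "emb (PNeg a) = Neg (emb a)"
| "emb (PConj a b) = Conj (emb a) (emb b)"

definition Bot :: "'a fm" where "Bot = Neg Top"
definition Or :: "'a fm \<Rightarrow> 'a fm \<Rightarrow> 'a fm" where "Or a b = Neg (Conj (Neg a) (Neg b))"
definition Imp :: "'a fm \<Rightarrow> 'a fm \<Rightarrow> 'a fm" where "Imp a b = Or (Neg a) b"
definition Iff :: "'a fm \<Rightarrow> 'a fm \<Rightarrow> 'a fm" where "Iff a b = Conj (Imp a b) (Imp b a)"

text \<open>Worlds have type 'w \<times> nat list: a world (w, i # is) of an updated model plays the role
  of the pair ((w,is), i) in the product W \<times> ({0} \<union> I) of the paper. Hence one
  fixed world type is closed under the model operation.\<close>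

record ('a, 'w) model =
  W :: "'w set"
  R :: "('w \<times> 'w) set"
  V :: "'a \<Rightarrow> 'w set"

definition wf_model :: "('a, 'w) model \<Rightarrow> bool" where
  "wf_model M \<longleftrightarrow> W M \<noteq> {} \<and> R M \<subseteq> W M \<times> W M \<and> (\<forall>p. V M p \<subseteq> W M)"

type_synonym ('a, 'w) emodel = "('a, 'w \<times> nat list) model"

definition upd :: "('a, 'w) emodel \<Rightarrow> (nat \<Rightarrow> 'a lit set) \<Rightarrow> nat set \<Rightarrow> ('a, 'w) emodel" where
  "upd M D I =
    \<lparr> W = {(w, i # is) | w i is. (w, is) \<in> W M \<and> i \<in> insert 0 I},
      R = {((w, i # is), (v, j # js)) | w i is v j js.
             ((w, is), (v, js)) \<in> R M \<and> i \<in> insert 0 I \<and> j \<in> insert 0 I},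
      V = (\<lambda>p. {(w, i # is) | w i is. (w, is) \<in> W M \<and> i \<in> insert 0 I \<and>
               (if i = 0 then (w, is) \<in> V M p
                else (NegL p \<in> D i \<or> (Pos p \<notin> D i \<and> NegL p \<notin> D i \<and> (w, is) \<in> V M p)))}) \<rparr>"

primrec sat :: "('a, 'w) emodel \<Rightarrow> 'w \<times> nat list \<Rightarrow> 'a fm \<Rightarrow> bool" where
  "sat M x Top = True"
| "sat M x (Atom p) = (x \<in> V M p)"
| "sat M x (Neg a) = (\<not> sat M x a)"
| "sat M x (Conj a b) = (sat M x a \<and> sat M x b)"
| "sat M x (Box a) = (\<forall>y. (x, y) \<in> R M \<longrightarrow> sat M y a)"
| "sat M x (Forget \<pi> a) =
     (\<forall>D1\<in>Cl \<pi>. \<forall>D2\<in>Cl (PNeg \<pi>).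
        sat (upd M (\<lambda>i. if i = 1 then D1 else D2) {1, 2}) (fst x, 0 # snd x) a)"

definition valid :: "'a fm \<Rightarrow> 'w itself \<Rightarrow> bool" where
  "valid \<phi> _ \<longleftrightarrow> (\<forall>M :: ('a, 'w) emodel. wf_model M \<longrightarrow> (\<forall>x\<in>W M. sat M x \<phi>))"

end

theory Submission
  imports Defs
begin

primrec patoms :: "'a pform \<Rightarrow> 'a set" where
  "patoms PTop = {}"
| "patoms (PAtom p) = {p}"
| "patoms (PNeg a) = patoms a"
| "patoms (PConj a b) = patoms a \<union> patoms b"

lemma finite_patoms: "finite (patoms \<phi>)"
  by (induction \<phi>) auto

lemma peval_agree: "(\<forall>p\<in>patoms \<phi>. v p = u p) \<Longrightarrow> peval v \<phi> = peval u \<phi>"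
  by (induction \<phi>) auto

lemma sat_emb: "sat M x (emb \<phi>) = peval (\<lambda>p. x \<in> V M p) \<phi>"
  by (induction \<phi>) auto

lemma Cl_nonempty:
  assumes "\<not> ptaut \<phi>"
  shows "\<exists>D. D \<in> Cl \<phi>"
proof -
  obtain v0 where v0: "\<not> peval v0 \<phi>" using assms unfolding ptaut_def by blast
  define D0 where "D0 = (\<lambda>p. if v0 p then NegL p else Pos p) ` patoms \<phi>"
  have fin0: "finite D0" unfolding D0_def using finite_patoms by blast
  have nt0: "\<not> tautological D0" unfolding D0_def tautological_def
    by (auto split: if_splits)
  have ent0: "entails_clause \<phi> D0"
    unfolding entails_clause_def
  proof (intro allI impI)
    fix v assume pv: "peval v \<phi>"
    show "ceval v D0"
    proof (rule ccontr)
      assume "\<not> ceval v D0"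
      hence "\<forall>p\<in>patoms \<phi>. v p = v0 p"
        unfolding ceval_def D0_def by (force split: if_splits)
      hence "peval v \<phi> = peval v0 \<phi>" by (rule peval_agree)
      with pv v0 show False by simp
    qed
  qed
  define S where "S = {D. D \<subseteq> D0 \<and> entails_clause \<phi> D}"
  have "D0 \<in> S" unfolding S_def using ent0 by simp
  hence "card ` S \<noteq> {}" by blast
  then obtain D where DS: "D \<in> S" and Dmin: "card D = Min (card ` S)"
    by (metis (no_types, lifting) Min_in finite_imageI finite_subset imageE
        fin0 S_def Pow_iff mem_Collect_eq subsetI finite_Pow_iff)
  have finS: "finite S" unfolding S_def
    by (rule finite_subset[of _ "Pow D0"]) (use fin0 in auto)
  have "D \<in> Cl \<phi>"
    unfolding Cl_def
  proof (intro CollectI conjI allI impI)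
    show fD: "finite D" using DS fin0 finite_subset unfolding S_def by blast
    show "\<not> tautological D" using DS nt0 unfolding S_def tautological_def by blast
    show "entails_clause \<phi> D" using DS unfolding S_def by blast
    fix D' assume "D' \<subset> D"
    show "\<not> entails_clause \<phi> D'"
    proof
      assume "entails_clause \<phi> D'"
      hence "D' \<in> S" using DS \<open>D' \<subset> D\<close> unfolding S_def by blast
      hence "Min (card ` S) \<le> card D'" using finS by simp
      moreover have "card D' < card D" using \<open>D' \<subset> D\<close> fD by (simp add: psubset_card_mono)
      ultimately show False using Dmin by simp
    qed
  qed
  thus ?thesis by blast
qed

lemma falsify:
  assumes "\<not> tautological D"
  shows "\<not> ceval (\<lambda>p. (NegL p \<in> D \<or> (Pos p \<notin> D \<and> NegL p \<notin> D \<and> b p))) D"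
proof -
  { fix l assume "l \<in> D" "\<not> (\<exists>p. Pos p \<in> D \<and> NegL p \<in> D)"
    hence "\<not> leval (\<lambda>p. (NegL p \<in> D \<or> (Pos p \<notin> D \<and> NegL p \<notin> D \<and> b p))) l"
      by (cases l) auto }
  thus ?thesis using assms unfolding ceval_def tautological_def by blast
qed

theorem proposition1:
  fixes \<pi> :: "'a::countable pform"
  assumes "\<not> ptaut \<pi>" and "\<not> pcontra \<pi>"
  shows "valid (Iff (Forget \<pi> (Or (Box (Neg (emb \<pi>))) (Box (emb \<pi>)))) (Box Bot)) TYPE('w)"
  unfolding valid_def
proof (intro allI impI ballI)
  fix M :: "('a, 'w) emodel" and x
  assume wf: "wf_model M" and xW: "x \<in> W M"
  obtain w "is" where x: "x = (w, is)" by (cases x)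
  show "sat M x (Iff (Forget \<pi> (Or (Box (Neg (emb \<pi>))) (Box (emb \<pi>)))) (Box Bot))"
  proof (cases "\<exists>y. (x, y) \<in> R M")
    case False
    thus ?thesis unfolding Iff_def Imp_def Or_def Bot_def
      by (auto simp: upd_def x)
  next
    case True
    then obtain v js where xy: "((w, is), (v, js)) \<in> R M" using x by auto
    have vW: "(v, js) \<in> W M" using wf xy unfolding wf_model_def by blast
    obtain D1 where D1: "D1 \<in> Cl \<pi>" using Cl_nonempty assms(1) by blast
    have "\<not> ptaut (PNeg \<pi>)" using assms(2) unfolding ptaut_def pcontra_def by simp
    then obtain D2 where D2: "D2 \<in> Cl (PNeg \<pi>)" using Cl_nonempty by blast
    define N where "N = upd M (\<lambda>i. if i = 1 then D1 else D2) {1, 2}"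
    have r1: "((w, 0 # is), (v, 1 # js)) \<in> R N" unfolding N_def upd_def using xy by auto
    have r2: "((w, 0 # is), (v, 2 # js)) \<in> R N" unfolding N_def upd_def using xy by auto
    have nt1: "\<not> tautological D1" and e1: "entails_clause \<pi> D1" using D1 unfolding Cl_def by auto
    have nt2: "\<not> tautological D2" and e2: "entails_clause (PNeg \<pi>) D2" using D2 unfolding Cl_def by auto
    have val1: "(\<lambda>p. (v, 1 # js) \<in> V N p) =
       (\<lambda>p. (NegL p \<in> D1 \<or> (Pos p \<notin> D1 \<and> NegL p \<notin> D1 \<and> (v, js) \<in> V M p)))"
      unfolding N_def upd_def using vW by auto
    have val2: "(\<lambda>p. (v, 2 # js) \<in> V N p) =
       (\<lambda>p. (NegL p \<in> D2 \<or> (Pos p \<notin> D2 \<and> NegL p \<notin> D2 \<and> (v, js) \<in> V M p)))"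
      unfolding N_def upd_def using vW by auto
    have s1: "\<not> sat N (v, 1 # js) (emb \<pi>)"
      unfolding sat_emb val1 using falsify[OF nt1, of "\<lambda>p. (v, js) \<in> V M p"] e1 unfolding entails_clause_def by blast
    have s2: "sat N (v, 2 # js) (emb \<pi>)"
      unfolding sat_emb val2 using falsify[OF nt2, of "\<lambda>p. (v, js) \<in> V M p"] e2 unfolding entails_clause_def by auto
    have "\<not> sat N (w, 0 # is) (Or (Box (Neg (emb \<pi>))) (Box (emb \<pi>)))"
      unfolding Or_def using r1 r2 s1 s2 by auto
    hence "\<not> sat M x (Forget \<pi> (Or (Box (Neg (emb \<pi>))) (Box (emb \<pi>))))"
      using D1 D2 unfolding N_def x by auto
    moreover have "\<not> sat M x (Box Bot)" using xy x unfolding Bot_def by auto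
    ultimately show ?thesis unfolding Iff_def Imp_def Or_def by simp
  qed
qed

end
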